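(* Let $\mathcal R=(V,E)$ be the Rado graph, let $w\notin V$, and let $\mathcal R'$ be the graph with vertex set $V\cup\{w\}$ and edge set $E\cup\{\{w,x\}:x\in V\}$. Then $\mathcal R'$ is IH-homogeneous but not IE-homogeneous.
   Context: All graphs are undirected and loopless; subgraphs are induced. The Rado graph is the unique countable graph such that for all finite disjoint vertex sets $A,B$ there is a vertex adjacent to all of $A$ and to none of $B$. $G$ is IH-homogeneous (resp. IE-homogeneous) if every isomorphism between finite induced subgraphs of $G$ is the restriction of an endomorphism (resp. a surjective endomorphism) of $G$, where an endomorphism is a map $G\to G$ sending adjacent vertices to adjacent vertices. *)

theory Defs
  imports Main "HOL-Library.Countable_Set"
begin

definition is_graph :: "'a set \<Rightarrow> ('a \<Rightarrow> 'a \<Rightarrow> bool) \<Rightarrow> bool" where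
  "is_graph V E \<longleftrightarrow> (\<forall>x\<in>V. \<forall>y\<in>V. E x y \<longrightarrow> E y x) \<and> (\<forall>x\<in>V. \<not> E x x)"

definition is_rado :: "'a set \<Rightarrow> ('a \<Rightarrow> 'a \<Rightarrow> bool) \<Rightarrow> bool" where
  "is_rado V E \<longleftrightarrow> is_graph V E \<and> countable V \<and>
     (\<forall>A B. finite A \<and> finite B \<and> A \<subseteq> V \<and> B \<subseteq> V \<and> A \<inter> B = {} \<longrightarrow>
        (\<exists>z\<in>V. (\<forall>a\<in>A. E z a) \<and> (\<forall>b\<in>B. \<not> E z b)))"

definition finite_induced_iso :: "'a set \<Rightarrow> ('a \<Rightarrow> 'a \<Rightarrow> bool) \<Rightarrow> 'a set \<Rightarrow> 'a set \<Rightarrow> ('a \<Rightarrow> 'a) \<Rightarrow> bool" where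
  "finite_induced_iso V E A B f \<longleftrightarrow> finite A \<and> A \<subseteq> V \<and> B \<subseteq> V \<and> bij_betw f A B \<and>
     (\<forall>x\<in>A. \<forall>y\<in>A. E x y \<longleftrightarrow> E (f x) (f y))"

definition endomorphism :: "'a set \<Rightarrow> ('a \<Rightarrow> 'a \<Rightarrow> bool) \<Rightarrow> ('a \<Rightarrow> 'a) \<Rightarrow> bool" where
  "endomorphism V E g \<longleftrightarrow> g ` V \<subseteq> V \<and> (\<forall>x\<in>V. \<forall>y\<in>V. E x y \<longrightarrow> E (g x) (g y))"

definition IH_homogeneous :: "'a set \<Rightarrow> ('a \<Rightarrow> 'a \<Rightarrow> bool) \<Rightarrow> bool" where
  "IH_homogeneous V E \<longleftrightarrow> (\<forall>A B f. finite_induced_iso V E A B f \<longrightarrow>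
     (\<exists>g. endomorphism V E g \<and> (\<forall>x\<in>A. g x = f x)))"

definition IE_homogeneous :: "'a set \<Rightarrow> ('a \<Rightarrow> 'a \<Rightarrow> bool) \<Rightarrow> bool" where
  "IE_homogeneous V E \<longleftrightarrow> (\<forall>A B f. finite_induced_iso V E A B f \<longrightarrow>
     (\<exists>g. endomorphism V E g \<and> g ` V = V \<and> (\<forall>x\<in>A. g x = f x)))"

definition add_cone :: "'a set \<Rightarrow> ('a \<Rightarrow> 'a \<Rightarrow> bool) \<Rightarrow> 'a \<Rightarrow> ('a \<Rightarrow> 'a \<Rightarrow> bool)" where
  "add_cone V E w = (\<lambda>x y. (x \<in> V \<and> y \<in> V \<and> E x y) \<or> (x = w \<and> y \<in> V) \<or> (y = w \<and> x \<in> V))"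

end

theory Submission
  imports Defs
begin

definition ext_step :: "'a set \<Rightarrow> ('a \<Rightarrow> 'a \<Rightarrow> bool) \<Rightarrow> nat \<Rightarrow> ('a \<Rightarrow> 'a) \<times> 'a set \<Rightarrow> ('a \<Rightarrow> 'a) \<times> 'a set" where
  "ext_step X R n p = (let v = from_nat_into X n; h = fst p; D = snd p in
     if v \<in> D then p else
     (h(v := (SOME t. t \<in> X \<and> (\<forall>u\<in>D. (R v u \<or> R u v) \<longrightarrow> R t (h u) \<and> R (h u) t))), insert v D))"

primrec ext_seq :: "'a set \<Rightarrow> ('a \<Rightarrow> 'a \<Rightarrow> bool) \<Rightarrow> ('a \<Rightarrow> 'a) \<Rightarrow> 'a set \<Rightarrow> nat \<Rightarrow> ('a \<Rightarrow> 'a) \<times> 'a set" where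
  "ext_seq X R f A 0 = (f, A)"
| "ext_seq X R f A (Suc n) = ext_step X R n (ext_seq X R f A n)"

lemma ext_step_mono:
  "snd p \<subseteq> snd (ext_step X R n p) \<and> (\<forall>x\<in>snd p. fst (ext_step X R n p) x = fst p x)"
  by (auto simp: ext_step_def Let_def)

lemma ext_seq_mono:
  assumes "n \<le> m"
  shows "snd (ext_seq X R f A n) \<subseteq> snd (ext_seq X R f A m) \<and>
         (\<forall>x\<in>snd (ext_seq X R f A n). fst (ext_seq X R f A m) x = fst (ext_seq X R f A n) x)"
  using assms
proof (induction m)
  case 0 then show ?case by simp
next
  case (Suc m)
  show ?case
  proof (cases "n = Suc m")
    case True then show ?thesis by simp
  next
    case False
    then have "n \<le> m" using Suc.prems by simp
    with Suc.IH ext_step_mono[of "ext_seq X R f A m" X R m] show ?thesis by auto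
  qed
qed

lemma ext_step_inv:
  assumes cn: "\<forall>S. finite S \<and> S \<subseteq> X \<longrightarrow> (\<exists>t\<in>X. \<forall>s\<in>S. R t s \<and> R s t)"
    and irr: "\<forall>x\<in>X. \<not> R x x" and ne: "X \<noteq> {}"
    and fin: "finite (snd p)" and sub: "snd p \<subseteq> X" and img: "fst p ` snd p \<subseteq> X"
    and hom: "\<forall>x\<in>snd p. \<forall>y\<in>snd p. R x y \<longrightarrow> R (fst p x) (fst p y)"
  shows "finite (snd (ext_step X R n p)) \<and> snd (ext_step X R n p) \<subseteq> X \<and>
     fst (ext_step X R n p) ` snd (ext_step X R n p) \<subseteq> X \<and>
     (\<forall>x\<in>snd (ext_step X R n p). \<forall>y\<in>snd (ext_step X R n p). R x y \<longrightarrow>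
         R (fst (ext_step X R n p) x) (fst (ext_step X R n p) y)) \<and>
     from_nat_into X n \<in> snd (ext_step X R n p)"
proof (cases "from_nat_into X n \<in> snd p")
  case True
  then show ?thesis using assms by (simp add: ext_step_def Let_def)
next
  case False
  define v where "v = from_nat_into X n"
  define h where "h = fst p"
  define D where "D = snd p"
  define P where "P = (\<lambda>t. t \<in> X \<and> (\<forall>u\<in>D. (R v u \<or> R u v) \<longrightarrow> R t (h u) \<and> R (h u) t))"
  define t where "t = (SOME t. P t)"
  have vX: "v \<in> X" using ne by (simp add: v_def from_nat_into)
  have vD: "v \<notin> D" using False by (simp add: v_def D_def)
  have "\<exists>t. P t"
  proof -
    let ?S = "h ` {u\<in>D. R v u \<or> R u v}"
    have "finite ?S" using fin D_def by simp
    moreover have "?S \<subseteq> X" using img h_def D_def by auto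
    ultimately obtain t where "t \<in> X" "\<forall>s\<in>?S. R t s \<and> R s t" using cn by blast
    then have "P t" unfolding P_def by blast
    then show ?thesis by blast
  qed
  then have Pt: "P t" unfolding t_def by (rule someI_ex)
  have eq: "ext_step X R n p = (h(v := t), insert v D)"
    using False by (simp add: ext_step_def Let_def v_def h_def D_def t_def P_def)
  have hom': "\<forall>x\<in>insert v D. \<forall>y\<in>insert v D. R x y \<longrightarrow> R ((h(v := t)) x) ((h(v := t)) y)"
  proof (intro ballI impI)
    fix x y assume x: "x \<in> insert v D" and y: "y \<in> insert v D" and r: "R x y"
    show "R ((h(v := t)) x) ((h(v := t)) y)"
    proof (cases "x = v")
      case True
      then have "y \<noteq> v" using r irr vX by auto
      then show ?thesis using True y r Pt unfolding P_def by auto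
    next
      case xv: False
      show ?thesis
      proof (cases "y = v")
        case True
        then show ?thesis using xv x r Pt unfolding P_def by auto
      next
        case False
        then show ?thesis using xv x y r hom h_def D_def by auto
      qed
    qed
  qed
  show ?thesis unfolding eq using fin sub img hom' vX Pt
    by (auto simp: D_def h_def v_def P_def)
qed

lemma ext_seq_inv:
  assumes cn: "\<forall>S. finite S \<and> S \<subseteq> X \<longrightarrow> (\<exists>t\<in>X. \<forall>s\<in>S. R t s \<and> R s t)"
    and irr: "\<forall>x\<in>X. \<not> R x x" and ne: "X \<noteq> {}"
    and fin: "finite A" and sub: "A \<subseteq> X" and img: "f ` A \<subseteq> X"
    and hom: "\<forall>x\<in>A. \<forall>y\<in>A. R x y \<longrightarrow> R (f x) (f y)"
  shows "finite (snd (ext_seq X R f A n)) \<and> snd (ext_seq X R f A n) \<subseteq> X \<and>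
     fst (ext_seq X R f A n) ` snd (ext_seq X R f A n) \<subseteq> X \<and>
     (\<forall>x\<in>snd (ext_seq X R f A n). \<forall>y\<in>snd (ext_seq X R f A n). R x y \<longrightarrow>
         R (fst (ext_seq X R f A n) x) (fst (ext_seq X R f A n) y))"
proof (induction n)
  case 0 then show ?case using assms by simp
next
  case (Suc n)
  then show ?case using ext_step_inv[OF cn irr ne, of "ext_seq X R f A n" n] by simp
qed

lemma ext_seq_mem:
  assumes cn: "\<forall>S. finite S \<and> S \<subseteq> X \<longrightarrow> (\<exists>t\<in>X. \<forall>s\<in>S. R t s \<and> R s t)"
    and irr: "\<forall>x\<in>X. \<not> R x x" and ne: "X \<noteq> {}"
    and fin: "finite A" and sub: "A \<subseteq> X" and img: "f ` A \<subseteq> X"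
    and hom: "\<forall>x\<in>A. \<forall>y\<in>A. R x y \<longrightarrow> R (f x) (f y)"
  shows "from_nat_into X n \<in> snd (ext_seq X R f A (Suc n))"
  using ext_step_inv[OF cn irr ne, of "ext_seq X R f A n" n] ext_seq_inv[OF assms, of n] by simp

lemma extend_hom:
  assumes cn: "\<forall>S. finite S \<and> S \<subseteq> X \<longrightarrow> (\<exists>t\<in>X. \<forall>s\<in>S. R t s \<and> R s t)"
    and irr: "\<forall>x\<in>X. \<not> R x x" and ne: "X \<noteq> {}" and cX: "countable X"
    and fin: "finite A" and sub: "A \<subseteq> X" and img: "f ` A \<subseteq> X"
    and hom: "\<forall>x\<in>A. \<forall>y\<in>A. R x y \<longrightarrow> R (f x) (f y)"
  shows "\<exists>g. g ` X \<subseteq> X \<and> (\<forall>x\<in>X. \<forall>y\<in>X. R x y \<longrightarrow> R (g x) (g y)) \<and> (\<forall>x\<in>A. g x = f x)"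
proof -
  let ?H = "ext_seq X R f A"
  define g where "g x = fst (?H (Suc (to_nat_on X x))) x" for x
  have inv: "\<And>n. finite (snd (?H n)) \<and> snd (?H n) \<subseteq> X \<and> fst (?H n) ` snd (?H n) \<subseteq> X \<and>
     (\<forall>x\<in>snd (?H n). \<forall>y\<in>snd (?H n). R x y \<longrightarrow> R (fst (?H n) x) (fst (?H n) y))"
    using ext_seq_inv[OF assms(1-3) fin sub img hom] by blast
  have mem: "\<And>x. x \<in> X \<Longrightarrow> x \<in> snd (?H (Suc (to_nat_on X x)))"
    using ext_seq_mem[OF assms(1-3) fin sub img hom] cX by (metis from_nat_into_to_nat_on)
  have gm: "\<And>x m. x \<in> X \<Longrightarrow> Suc (to_nat_on X x) \<le> m \<Longrightarrow> g x = fst (?H m) x \<and> x \<in> snd (?H m)"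
  proof -
    fix x m assume x: "x \<in> X" and le: "Suc (to_nat_on X x) \<le> m"
    show "g x = fst (?H m) x \<and> x \<in> snd (?H m)"
      using ext_seq_mono[OF le, of X R f A] mem[OF x] unfolding g_def by auto
  qed
  have "g ` X \<subseteq> X"
  proof
    fix y assume "y \<in> g ` X"
    then obtain x where x: "x \<in> X" "y = g x" by blast
    then show "y \<in> X" using gm[OF x(1) le_refl] inv by blast
  qed
  moreover have "\<forall>x\<in>X. \<forall>y\<in>X. R x y \<longrightarrow> R (g x) (g y)"
  proof (intro ballI impI)
    fix x y assume x: "x \<in> X" and y: "y \<in> X" and r: "R x y"
    let ?m = "Suc (max (to_nat_on X x) (to_nat_on X y))"
    have lx: "Suc (to_nat_on X x) \<le> ?m" by simp
    have ly: "Suc (to_nat_on X y) \<le> ?m" by simp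
    note a = gm[OF x lx] and b = gm[OF y ly]
    show "R (g x) (g y)" using a b inv r by metis
  qed
  moreover have "\<forall>x\<in>A. g x = f x"
  proof
    fix x assume xA: "x \<in> A"
    have "x \<in> X" using xA sub by blast
    have "g x = fst (?H (Suc (to_nat_on X x))) x" by (simp add: g_def)
    also have "\<dots> = fst (?H 0) x" using ext_seq_mono[of 0 "Suc (to_nat_on X x)" X R f A] xA by simp
    also have "\<dots> = f x" by simp
    finally show "g x = f x" .
  qed
  ultimately show ?thesis by blast
qed

theorem mainTheorem20:
  fixes V :: "'a set" and E :: "'a \<Rightarrow> 'a \<Rightarrow> bool" and w :: 'a
  assumes "is_rado V E" and "w \<notin> V"
  shows "IH_homogeneous (insert w V) (add_cone V E w) \<and>
         \<not> IE_homogeneous (insert w V) (add_cone V E w)"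
proof
  let ?X = "insert w V" and ?R = "add_cone V E w"
  have sym: "\<forall>x\<in>V. \<forall>y\<in>V. E x y \<longrightarrow> E y x" and irrE: "\<forall>x\<in>V. \<not> E x x"
    using assms(1) by (auto simp: is_rado_def is_graph_def)
  have ext: "\<And>A B. finite A \<Longrightarrow> finite B \<Longrightarrow> A \<subseteq> V \<Longrightarrow> B \<subseteq> V \<Longrightarrow> A \<inter> B = {} \<Longrightarrow>
        \<exists>z\<in>V. (\<forall>a\<in>A. E z a) \<and> (\<forall>b\<in>B. \<not> E z b)"
    using assms(1) unfolding is_rado_def by blast
  have cV: "countable V" using assms(1) by (simp add: is_rado_def)
  show "IH_homogeneous ?X ?R"
    unfolding IH_homogeneous_def
  proof (intro allI impI)
    fix A B f assume iso: "finite_induced_iso ?X ?R A B f"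
    have cn: "\<forall>S. finite S \<and> S \<subseteq> ?X \<longrightarrow> (\<exists>t\<in>?X. \<forall>s\<in>S. ?R t s \<and> ?R s t)"
    proof (intro allI impI)
      fix S assume S: "finite S \<and> S \<subseteq> ?X"
      obtain z where z: "z \<in> V" "\<forall>a\<in>S - {w}. E z a"
        using ext[of "S - {w}" "{}"] S by auto
      have "\<forall>s\<in>S. ?R z s \<and> ?R s z"
      proof
        fix s assume "s \<in> S"
        moreover have "s \<in> V \<Longrightarrow> E s z" using z sym assms(2) \<open>s \<in> S\<close> by (metis DiffI singletonD)
        ultimately show "?R z s \<and> ?R s z" using z S unfolding add_cone_def by auto
      qed
      then show "\<exists>t\<in>?X. \<forall>s\<in>S. ?R t s \<and> ?R s t" using z by blast
    qed
    have irr: "\<forall>x\<in>?X. \<not> ?R x x" using irrE assms(2) by (auto simp: add_cone_def)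
    have fin: "finite A" and sub: "A \<subseteq> ?X" and img: "f ` A \<subseteq> ?X"
      and hom: "\<forall>x\<in>A. \<forall>y\<in>A. ?R x y \<longrightarrow> ?R (f x) (f y)"
      using iso unfolding finite_induced_iso_def bij_betw_def by auto
    obtain g where g: "g ` ?X \<subseteq> ?X" "\<forall>x\<in>?X. \<forall>y\<in>?X. ?R x y \<longrightarrow> ?R (g x) (g y)" "\<forall>x\<in>A. g x = f x"
      using extend_hom[OF cn irr _ _ fin sub img hom] cV by auto
    then show "\<exists>g. endomorphism ?X ?R g \<and> (\<forall>x\<in>A. g x = f x)"
      unfolding endomorphism_def by blast
  qed
  show "\<not> IE_homogeneous ?X ?R"
  proof
    assume IE: "IE_homogeneous ?X ?R"
    obtain x where x: "x \<in> V" using ext[of "{}" "{}"] by auto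
    obtain z where z: "z \<in> V" "E z x" using ext[of "{x}" "{}"] x by auto
    have zx: "z \<noteq> x" using z x irrE by auto
    obtain y where y: "y \<in> V" "\<not> E y z" "\<not> E y x" using ext[of "{}" "{x, z}"] z x by auto
    have "E x z" using z x sym by auto
    then have yx: "y \<noteq> x" using y by auto
    have iso: "finite_induced_iso ?X ?R {w} {x} (\<lambda>_. x)"
      unfolding finite_induced_iso_def using x assms(2) irrE by (auto simp: bij_betw_def add_cone_def)
    obtain g where g: "endomorphism ?X ?R g" "g ` ?X = ?X" "g w = x"
      using IE iso unfolding IE_homogeneous_def by fastforce
    have "y \<in> g ` ?X" using g(2) y by blast
    then obtain u where u: "u \<in> ?X" "g u = y" by blast
    have "u \<noteq> w" using u g(3) yx by auto
    then have uV: "u \<in> V" using u by auto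
    have "?R w u" using uV by (simp add: add_cone_def)
    then have "?R (g w) (g u)" using g(1) uV unfolding endomorphism_def by blast
    then have "?R x y" using u g(3) by simp
    then have "E x y" using x y assms(2) unfolding add_cone_def by auto
    then show False using x y sym by auto
  qed
qed

end
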